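(* In the single-block Spice setting, fix $t>0$ and run iterations $k=0,1,\dots,t$ with a constant scaling factor $\rho=\rho(t)>0$, where for every $k=1,\dots,t$ $$\eta_k\ \ge\ \max\Big\{\eta_{k-1}\sqrt{\tfrac{\mathsf{R}(x^k)}{\mathsf{R}(x^{k-1})}},\ \ \eta_{k-1}\,\tfrac{\mathsf{R}(\bar x^k)\sqrt{\mathsf{R}(x^{k-1})}}{\mathsf{R}(\bar x^{k-1})\sqrt{\mathsf{R}(x^k)}}\Big\}.$$ Define $\bar x_t=\frac{1}{t+1}\sum_{k=0}^t\bar x^k$, $\eta_t^{\mathrm{avg}}=\frac{t+1}{\sum_{k=0}^t 1/\eta_k}$ and $\bar w_t=\frac{\sum_{k=0}^t\bar w^k/\eta_k}{\sum_{k=0}^t1/\eta_k}$. Then $\bar w_t\in\Omega$ and for every $w^*=(x^*,\lambda^* )\in\Omega$, $$f(\bar x_t)-f(x^* )+(\bar w_t-w^* )^\top\frac{1}{\eta_t^{\mathrm{avg}}\rho(t)}\Gamma(w^* )\ \le\ \frac{1}{2\eta_0\rho(t)(t+1)}\|w^*-w^0\|_{\mathsf{H}_0}^2,$$ where $\mathsf{H}_0=\begin{pmatrix}\sqrt{\mathsf{R}(x^0)}\,I_n&0\\0&\frac{\mu\mathsf{R}(\bar x^0)}{\sqrt{\mathsf{R}(x^0)}}I_p\end{pmatrix}$ (so that $H_0=\frac{1}{\eta_0}\mathsf{H}_0$).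
   Context: Single-block Spice setting. Let $\mathcal{X}\subseteq\mathbb{R}^n$ be nonempty closed convex, $f:\mathbb{R}^n\to\mathbb{R}$ convex, $\phi_1,\dots,\phi_p:\mathbb{R}^n\to\mathbb{R}$ convex and continuously differentiable, $\Phi(x)=(\phi_1(x),\dots,\phi_p(x))^\top$, $\mathcal{D}\Phi(x)\in\mathbb{R}^{p\times n}$ its Jacobian. Let $\mathcal{Z}=\mathbb{R}^p_+$, $\Omega=\mathcal{X}\times\mathcal{Z}$, $w=(x,\lambda)$, $\Gamma(w)=(\mathcal{D}\Phi(x)^\top\lambda,\,-\Phi(x))$. For a symmetric matrix $A$, $\|v\|_A^2:=v^\top A v$; the norm of a matrix is the spectral norm; $\mathsf{R}(x):=\|\mathcal{D}\Phi(x)\|^2$. The scaled Lagrangian is $\mathcal{L}(x,\lambda,\rho,\eta)=\rho f(x)+\frac1\eta\lambda^\top\Phi(x)$. Fix $\rho>0$, $\mu>1$, a starting point $w^0=(x^0,\lambda^0)\in\Omega$ and positive numbers $\eta_0,\eta_1,\dots$. Given $w^k=(x^k,\lambda^k)\in\Omega$, iteration $k$ is: $r_k=\frac{1}{\eta_k}\sqrt{\mathsf{R}(x^k)}$; $\bar x^k=\arg\min_{x\in\mathcal{X}}\{\mathcal{L}(x,\lambda^k,\rho,\eta_k)+\frac{r_k}{2}\|x-x^k\|^2\}$; $s_k=\frac{\mu\,\mathsf{R}(\bar x^k)}{\eta_k\sqrt{\mathsf{R}(x^k)}}$; $\bar\lambda^k=\arg\max_{\lambda\in\mathcal{Z}}\{\mathcal{L}(\bar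 x^k,\lambda,\rho,\eta_k)-\frac{s_k}{2}\|\lambda-\lambda^k\|^2\}$ (equivalently $\bar\lambda^k=\max\{\lambda^k+\frac{1}{\eta_k s_k}\Phi(\bar x^k),0\}$ componentwise); $\bar w^k=(\bar x^k,\bar\lambda^k)$; and $w^{k+1}=w^k-M_k(w^k-\bar w^k)$ where $M_k=\begin{pmatrix}I_n & -\frac{1}{\eta_k r_k}\mathcal{D}\Phi(\bar x^k)^\top\\ 0 & I_p\end{pmatrix}$. It is assumed throughout that $\mathsf{R}(x^k)>0$ and $\mathsf{R}(\bar x^k)>0$ for all $k$. Define $Q_k=\begin{pmatrix} r_kI_n & -\frac{1}{\eta_k}\mathcal{D}\Phi(\bar x^k)^\top\\ 0 & s_kI_p\end{pmatrix}$, $H_k=\begin{pmatrix} r_kI_n&0\\0&s_kI_p\end{pmatrix}$, $G_k=\begin{pmatrix} r_kI_n&0\\0&s_kI_p-\frac{1}{\eta_k^2r_k}\mathcal{D}\Phi(\bar x^k)\mathcal{D}\Phi(\bar x^k)^\top\end{pmatrix}$. *)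

theory Defs
  imports "HOL-Analysis.Analysis"
begin

definition spec_norm :: "real^'n^'m \<Rightarrow> real" where
  "spec_norm A = onorm (\<lambda>v. A *v v)"

text \<open>R(x) = ||D Phi(x)||^2, where DPhi x is the Jacobian (p x n matrix, rows = gradients).\<close>
definition Rfun :: "('a \<Rightarrow> real^'n^'m) \<Rightarrow> 'a \<Rightarrow> real" where
  "Rfun DPhi x = (spec_norm (DPhi x))\<^sup>2"

definition scaled_lagrangian ::
  "(real^'n \<Rightarrow> real) \<Rightarrow> (real^'n \<Rightarrow> real^'p) \<Rightarrow> real^'n \<Rightarrow> real^'p \<Rightarrow> real \<Rightarrow> real \<Rightarrow> real" where
  "scaled_lagrangian f Phi x lam rho eta = rho * f x + (1 / eta) * (lam \<bullet> Phi x)"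

definition Gamma ::
  "(real^'n \<Rightarrow> real^'p) \<Rightarrow> (real^'n \<Rightarrow> real^'n^'p) \<Rightarrow> (real^'n) \<times> (real^'p) \<Rightarrow> (real^'n) \<times> (real^'p)" where
  "Gamma Phi DPhi w = (transpose (DPhi (fst w)) *v snd w, - Phi (fst w))"

end

theory Submission imports Defs begin
lemma dir_deriv:
  fixes g :: "real^'n \<Rightarrow> real"
  assumes "(g has_derivative (\<lambda>h. a \<bullet> h)) (at z)"
  shows "((\<lambda>s. (g (z + s *\<^sub>R d) - g z) / s) \<longlongrightarrow> a \<bullet> d) (at_right 0)"
proof -
  have l: "((\<lambda>s. z + s *\<^sub>R d) has_derivative (\<lambda>s. s *\<^sub>R d)) (at 0)"
    by (auto intro!: derivative_eq_intros)
  have "((g \<circ> (\<lambda>s. z + s *\<^sub>R d)) has_derivative ((\<lambda>h. a \<bullet> h) \<circ> (\<lambda>s. s *\<^sub>R d))) (at 0)"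
    by (rule diff_chain_at[OF l]) (simp add: assms)
  moreover have "((\<lambda>h. a \<bullet> h) \<circ> (\<lambda>s. s *\<^sub>R d)) = (*) (a \<bullet> d)"
    by (auto simp: fun_eq_iff)
  ultimately have "((\<lambda>s. g (z + s *\<^sub>R d)) has_field_derivative (a \<bullet> d)) (at 0)"
    by (simp add: has_field_derivative_def o_def)
  then have "((\<lambda>s. (g (z + s *\<^sub>R d) - g z) / s) \<longlongrightarrow> a \<bullet> d) (at 0)"
    by (simp add: has_field_derivative_iff)
  then show ?thesis by (rule tendsto_mono[OF at_le, rotated]) simp
qed

lemma conv_grad:
  fixes g :: "real^'n \<Rightarrow> real"
  assumes cv: "convex_on UNIV g" and d: "(g has_derivative (\<lambda>h. a \<bullet> h)) (at z)"
  shows "g z + a \<bullet> (y - z) \<le> g y"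
proof -
  have lim: "((\<lambda>s. (g (z + s *\<^sub>R (y - z)) - g z) / s) \<longlongrightarrow> a \<bullet> (y - z)) (at_right 0)"
    by (rule dir_deriv[OF d])
  have ev: "\<forall>\<^sub>F s in at_right 0. (g (z + s *\<^sub>R (y - z)) - g z) / s \<le> g y - g z"
  proof (rule eventually_at_rightI[of 0 1])
    fix s :: real assume s: "s \<in> {0<..<1}"
    have "z + s *\<^sub>R (y - z) = (1 - s) *\<^sub>R z + s *\<^sub>R y" by (simp add: algebra_simps)
    then have "g (z + s *\<^sub>R (y - z)) \<le> (1 - s) * g z + s * g y"
      using convex_onD[OF cv, of s z y] s by simp
    then have "g (z + s *\<^sub>R (y - z)) - g z \<le> s * (g y - g z)" by (simp add: algebra_simps)
    then show "(g (z + s *\<^sub>R (y - z)) - g z) / s \<le> g y - g z"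
      using s by (simp add: divide_le_eq mult.commute)
  qed simp
  have "a \<bullet> (y - z) \<le> g y - g z"
    by (rule tendsto_upperbound[OF lim ev]) simp
  then show ?thesis by simp
qed

lemma xVI:
  fixes f q :: "real^'n \<Rightarrow> real"
  assumes xb: "xb \<in> X" and y: "y \<in> X" and cX: "convex X" and cf: "convex_on UNIV f"
    and rho: "rho \<ge> 0" and dq: "(q has_derivative (\<lambda>h. a \<bullet> h)) (at xb)"
    and mn: "\<forall>y\<in>X. rho * f xb + q xb + c * (norm (xb - xk))\<^sup>2 \<le> rho * f y + q y + c * (norm (y - xk))\<^sup>2"
  shows "0 \<le> rho * (f y - f xb) + a \<bullet> (y - xb) + 2 * c * ((xb - xk) \<bullet> (y - xb))"
proof -
  define d where "d = y - xb"
  have lim0: "((\<lambda>s. (q (xb + s *\<^sub>R d) - q xb) / s) \<longlongrightarrow> a \<bullet> d) (at_right 0)"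
    by (rule dir_deriv[OF dq])
  have lim: "((\<lambda>s. rho * (f y - f xb) + (q (xb + s *\<^sub>R d) - q xb) / s + 2 * c * ((xb - xk) \<bullet> d) + c * s * (norm d)\<^sup>2)
     \<longlongrightarrow> rho * (f y - f xb) + a \<bullet> d + 2 * c * ((xb - xk) \<bullet> d) + c * 0 * (norm d)\<^sup>2) (at_right 0)"
    by (intro tendsto_intros lim0)
  have ev: "\<forall>\<^sub>F s in at_right 0. 0 \<le> rho * (f y - f xb) + (q (xb + s *\<^sub>R d) - q xb) / s + 2 * c * ((xb - xk) \<bullet> d) + c * s * (norm d)\<^sup>2"
  proof (rule eventually_at_rightI[of 0 1])
    fix s :: real assume s: "s \<in> {0<..<1}"
    have zeq: "xb + s *\<^sub>R d = (1 - s) *\<^sub>R xb + s *\<^sub>R y" by (simp add: d_def algebra_simps)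
    have zX: "xb + s *\<^sub>R d \<in> X" unfolding zeq
      using s xb y cX by (simp add: convex_def)
    have fz: "f (xb + s *\<^sub>R d) \<le> (1 - s) * f xb + s * f y"
      unfolding zeq using convex_onD[OF cf, of s xb y] s by simp
    have nz: "(norm (xb + s *\<^sub>R d - xk))\<^sup>2 = (norm (xb - xk))\<^sup>2 + 2 * s * ((xb - xk) \<bullet> d) + s\<^sup>2 * (norm d)\<^sup>2"
    proof -
      have "xb + s *\<^sub>R d - xk = (xb - xk) + s *\<^sub>R d" by simp
      then show ?thesis
        by (simp only: power2_norm_eq_inner inner_add_left inner_add_right inner_scaleR_left inner_scaleR_right inner_commute[of d "xb - xk"]) (simp add: power2_eq_square algebra_simps)
    qed
    have m: "rho * f xb + q xb + c * (norm (xb - xk))\<^sup>2 \<le> rho * f (xb + s *\<^sub>R d) + q (xb + s *\<^sub>R d) + c * (norm (xb + s *\<^sub>R d - xk))\<^sup>2"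
      using mn zX by blast
    have "rho * f (xb + s *\<^sub>R d) \<le> rho * ((1 - s) * f xb + s * f y)"
      by (rule mult_left_mono[OF fz rho])
    moreover have "c * (norm (xb + s *\<^sub>R d - xk))\<^sup>2 = c * (norm (xb - xk))\<^sup>2 + s * (2 * c * ((xb - xk) \<bullet> d)) + s * (c * s * (norm d)\<^sup>2)"
      by (simp only: nz) algebra
    moreover have "rho * ((1 - s) * f xb + s * f y) = rho * f xb + s * (rho * (f y - f xb))" by algebra
    ultimately have "0 \<le> s * (rho * (f y - f xb)) + (q (xb + s *\<^sub>R d) - q xb) + s * (2 * c * ((xb - xk) \<bullet> d)) + s * (c * s * (norm d)\<^sup>2)"
      using m by linarith
    also have "\<dots> = s * (rho * (f y - f xb) + (q (xb + s *\<^sub>R d) - q xb) / s + 2 * c * ((xb - xk) \<bullet> d) + c * s * (norm d)\<^sup>2)"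
      using s by (simp add: distrib_left)
    finally show "0 \<le> rho * (f y - f xb) + (q (xb + s *\<^sub>R d) - q xb) / s + 2 * c * ((xb - xk) \<bullet> d) + c * s * (norm d)\<^sup>2"
      using s by (simp add: zero_le_mult_iff)
  qed simp
  have "0 \<le> rho * (f y - f xb) + a \<bullet> d + 2 * c * ((xb - xk) \<bullet> d) + c * 0 * (norm d)\<^sup>2"
    by (rule tendsto_lowerbound[OF lim ev]) simp
  then show ?thesis by (simp add: d_def)
qed

lemma lamPhi_deriv:
  fixes Phi :: "real^'n \<Rightarrow> real^'p"
  assumes "\<forall>i. ((\<lambda>y. Phi y $ i) has_derivative (\<lambda>h. D $ i \<bullet> h)) (at z)"
  shows "((\<lambda>y. c * (lam \<bullet> Phi y)) has_derivative (\<lambda>h. (c *\<^sub>R (transpose D *v lam)) \<bullet> h)) (at z)"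
proof -
  have "((\<lambda>y. c * (\<Sum>i\<in>UNIV. lam $ i * Phi y $ i)) has_derivative (\<lambda>h. c * (\<Sum>i\<in>UNIV. lam $ i * (D $ i \<bullet> h)))) (at z)"
    using assms by (intro has_derivative_mult_right has_derivative_sum) auto
  moreover have "(\<lambda>h. c * (\<Sum>i\<in>UNIV. lam $ i * (D $ i \<bullet> h))) = (\<lambda>h. (c *\<^sub>R (transpose D *v lam)) \<bullet> h)"
  proof
    fix h
    have "(transpose D *v lam) \<bullet> h = lam \<bullet> (D *v h)"
      by (simp add: transpose_matrix_vector dot_lmul_matrix)
    also have "\<dots> = (\<Sum>i\<in>UNIV. lam $ i * (D $ i \<bullet> h))"
      by (simp add: inner_vec_def matrix_vector_mult_def)
    finally show "c * (\<Sum>i\<in>UNIV. lam $ i * (D $ i \<bullet> h)) = (c *\<^sub>R (transpose D *v lam)) \<bullet> h" by simp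
  qed
  ultimately show ?thesis by (simp add: inner_vec_def)
qed

lemma conv_grad_vec:
  fixes Phi :: "real^'n \<Rightarrow> real^'p"
  assumes cv: "\<forall>i. convex_on UNIV (\<lambda>y. Phi y $ i)"
    and dv: "\<forall>z i. ((\<lambda>y. Phi y $ i) has_derivative (\<lambda>h. (DPhi z $ i) \<bullet> h)) (at z)"
    and l: "\<forall>i. l $ i \<ge> 0"
  shows "l \<bullet> Phi z + l \<bullet> (DPhi z *v (y - z)) \<le> l \<bullet> Phi y"
proof -
  have "\<And>i. Phi z $ i + DPhi z $ i \<bullet> (y - z) \<le> Phi y $ i"
    using conv_grad[of "\<lambda>y. Phi y $ i" "DPhi z $ i" z y for i] cv dv by blast
  then have "\<And>i. l $ i * Phi z $ i + l $ i * (DPhi z $ i \<bullet> (y - z)) \<le> l $ i * Phi y $ i"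
    using l by (metis distrib_left mult_left_mono)
  then have "(\<Sum>i\<in>UNIV. l $ i * Phi z $ i + l $ i * (DPhi z $ i \<bullet> (y - z))) \<le> (\<Sum>i\<in>UNIV. l $ i * Phi y $ i)"
    by (rule sum_mono)
  moreover have "l \<bullet> (DPhi z *v (y - z)) = (\<Sum>i\<in>UNIV. l $ i * (DPhi z $ i \<bullet> (y - z)))"
    by (simp add: inner_vec_def matrix_vector_mult_def)
  ultimately show ?thesis by (simp add: inner_vec_def sum.distrib)
qed

lemma lamVI:
  fixes lam lb ls Ph :: "real^'p"
  assumes s: "s > 0" and e: "eta > 0" and ls: "\<forall>i. ls $ i \<ge> 0"
    and lb: "lb = (\<chi> i. max (lam $ i + Ph $ i / (eta * s)) 0)"
  shows "1 / eta * ((ls - lb) \<bullet> Ph) \<le> s * ((ls - lb) \<bullet> (lb - lam))"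
proof -
  have "\<And>i. 1 / eta * ((ls $ i - lb $ i) * Ph $ i) \<le> s * ((ls $ i - lb $ i) * (lb $ i - lam $ i))"
  proof -
    fix i
    have es: "eta * s > 0" using s e by simp
    show "1 / eta * ((ls $ i - lb $ i) * Ph $ i) \<le> s * ((ls $ i - lb $ i) * (lb $ i - lam $ i))"
    proof (cases "lam $ i + Ph $ i / (eta * s) \<ge> 0")
      case True
      then have "lb $ i = lam $ i + Ph $ i / (eta * s)" using lb by simp
      then have "s * (lb $ i - lam $ i) = Ph $ i / eta" using s e by (simp add: field_simps)
      then have "s * ((ls $ i - lb $ i) * (lb $ i - lam $ i)) = (ls $ i - lb $ i) * (Ph $ i / eta)"
        by (metis mult.left_commute)
      then show ?thesis by simp
    next
      case False
      then have lb0: "lb $ i = 0" using lb by simp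
      from False have "s * lam $ i + Ph $ i / eta < 0"
        using s e es by (simp add: field_simps)
      then have "ls $ i * (s * lam $ i + Ph $ i / eta) \<le> 0"
        using ls by (simp add: mult_nonneg_nonpos)
      then show ?thesis using lb0 by (simp add: algebra_simps)
    qed
  qed
  then have "(\<Sum>i\<in>UNIV. 1 / eta * ((ls $ i - lb $ i) * Ph $ i)) \<le> (\<Sum>i\<in>UNIV. s * ((ls $ i - lb $ i) * (lb $ i - lam $ i)))"
    by (rule sum_mono)
  then show ?thesis by (simp add: inner_vec_def sum_distrib_left)
qed

lemma normT:
  fixes D :: "real^'n^'p"
  shows "norm (transpose D *v u) \<le> spec_norm D * norm u"
proof (cases "transpose D *v u = 0")
  case True then show ?thesis
    by (simp add: spec_norm_def onorm_pos_le[OF matrix_vector_mul_bounded_linear])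
next
  case False
  let ?g = "transpose D *v u"
  have "(norm ?g)\<^sup>2 = ?g \<bullet> ?g" by (simp add: power2_norm_eq_inner)
  also have "\<dots> = u \<bullet> (D *v ?g)" by (simp add: transpose_matrix_vector dot_lmul_matrix)
  also have "\<dots> \<le> norm u * norm (D *v ?g)" by (rule norm_cauchy_schwarz)
  also have "\<dots> \<le> norm u * (spec_norm D * norm ?g)"
    unfolding spec_norm_def
    by (rule mult_left_mono[OF onorm[OF matrix_vector_mul_bounded_linear]]) simp
  finally have "norm ?g * norm ?g \<le> (spec_norm D * norm u) * norm ?g"
    by (simp add: power2_eq_square algebra_simps)
  then show ?thesis using False by simp
qed

lemma ns_add: "(norm (a + b :: real^'n))\<^sup>2 = (norm a)\<^sup>2 + 2 * (a \<bullet> b) + (norm b)\<^sup>2"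
  by (simp add: power2_norm_eq_inner inner_add_left inner_add_right inner_commute[of b a])
lemma ns_sub: "(norm (a - b :: real^'n))\<^sup>2 = (norm a)\<^sup>2 - 2 * (a \<bullet> b) + (norm b)\<^sup>2"
  by (simp add: power2_norm_eq_inner inner_diff_left inner_diff_right inner_commute[of b a])
lemma ns_subs: "(norm (a - c *\<^sub>R b :: real^'n))\<^sup>2 = (norm a)\<^sup>2 - 2 * c * (a \<bullet> b) + c\<^sup>2 * (norm b)\<^sup>2"
  by (simp add: ns_sub power_mult_distrib)


lemma alg:
  fixes ie r s c rho fb fs P4 A1 A2 A3 A4 Q L BA Nb Na Ng Ga Ne Nu EU :: real
  assumes ie: "ie > 0" and r: "r \<ge> 0" and Nb: "Nb \<ge> 0" and rc: "r * c = ie"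
    and ng: "r * c\<^sup>2 * Ng \<le> s * Nu"
    and S1: "0 \<le> rho * (fs - fb) + ie * L + r * BA"
    and S2: "ie * (A3 - A4) \<le> s * (- EU)"
    and S3: "A4 + Q \<le> A2" and S4: "A1 + P4 \<le> A3" and G: "Ga = L - Q"
  shows "rho * (fb - fs) + ie * (P4 - (A2 - A1))
     \<le> 1/2 * (r * ((Na + 2 * BA + Nb) - (Na - 2 * c * Ga + c\<^sup>2 * Ng)) + s * ((Ne - 2 * EU + Nu) - Ne))"
proof -
  have k3: "ie * (A4 + Q) \<le> ie * A2" using S3 ie by (simp add: mult_left_mono)
  have k4: "ie * (A1 + P4) \<le> ie * A3" using S4 ie by (simp add: mult_left_mono)
  have rhs: "1/2 * (r * ((Na + 2 * BA + Nb) - (Na - 2 * c * Ga + c\<^sup>2 * Ng)) + s * ((Ne - 2 * EU + Nu) - Ne))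
      = r * BA + (r * c) * Ga + r * Nb / 2 - r * c\<^sup>2 * Ng / 2 - s * EU + s * Nu / 2"
    by (simp add: algebra_simps)
  have rnb: "r * Nb \<ge> 0" using r Nb by simp
  have rcg: "(r * c) * Ga = ie * L - ie * Q" unfolding rc G by (simp add: algebra_simps)
  show ?thesis unfolding rhs rcg
    using k3 k4 S1 S2 ng rnb by (simp add: algebra_simps)
qed


lemma Tdot: "(x :: real^'n) \<bullet> (transpose (D :: real^'n^'p) *v l) = l \<bullet> (D *v x)"
  by (simp add: transpose_matrix_vector dot_lmul_matrix inner_commute[of x])

lemma step:
  fixes X :: "(real^'n) set" and f :: "real^'n \<Rightarrow> real" and Phi :: "real^'n \<Rightarrow> real^'p"
    and DPhi :: "real^'n \<Rightarrow> real^'n^'p"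
    and xk xb xs xn :: "real^'n" and lk lbk ls ln :: "real^'p"
  assumes cX: "convex X" and cf: "convex_on UNIV f"
    and Phi_convex: "\<forall>i. convex_on UNIV (\<lambda>y. Phi y $ i)"
    and Phi_deriv: "\<forall>z i. ((\<lambda>y. Phi y $ i) has_derivative (\<lambda>h. (DPhi z $ i) \<bullet> h)) (at z)"
    and rho: "rho > 0" and eta: "eta > 0" and mu: "mu > 1"
    and Rx: "Rfun DPhi xk > 0" and Rb: "Rfun DPhi xb > 0"
    and xbX: "xb \<in> X" and xsX: "xs \<in> X" and ls: "\<forall>i. ls $ i \<ge> 0"
    and mn: "\<forall>y\<in>X. scaled_lagrangian f Phi xb lk rho eta
                  + (sqrt (Rfun DPhi xk) / eta) / 2 * (norm (xb - xk))\<^sup>2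
               \<le> scaled_lagrangian f Phi y lk rho eta
                  + (sqrt (Rfun DPhi xk) / eta) / 2 * (norm (y - xk))\<^sup>2"
    and lb: "lbk = (\<chi> i. max (lk $ i + Phi xb $ i /
                 (eta * (mu * Rfun DPhi xb / (eta * sqrt (Rfun DPhi xk))))) 0)"
    and xn: "xn = xk - ((xk - xb)
           - (1 / (eta * (sqrt (Rfun DPhi xk) / eta))) *\<^sub>R
               (transpose (DPhi xb) *v (lk - lbk)))"
    and ln: "ln = lk - (lk - lbk)"
  shows "rho * (f xb - f xs) + 1 / eta * ((xb - xs) \<bullet> (transpose (DPhi xs) *v ls) - (lbk - ls) \<bullet> Phi xs)
     \<le> 1/2 * ((sqrt (Rfun DPhi xk) / eta) * ((norm (xs - xk))\<^sup>2 - (norm (xs - xn))\<^sup>2)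
         + (mu * Rfun DPhi xb / (eta * sqrt (Rfun DPhi xk))) * ((norm (ls - lk))\<^sup>2 - (norm (ls - ln))\<^sup>2))"
proof -
  define D where "D = DPhi xb"
  define r where "r = sqrt (Rfun DPhi xk) / eta"
  define s where "s = mu * Rfun DPhi xb / (eta * sqrt (Rfun DPhi xk))"
  define c where "c = 1 / sqrt (Rfun DPhi xk)"
  define g where "g = transpose D *v (lk - lbk)"
  have sq: "sqrt (Rfun DPhi xk) > 0" using Rx by simp
  have spos: "s > 0" unfolding s_def using mu Rb eta sq by simp
  have r0: "r \<ge> 0" unfolding r_def using sq eta by simp
  have rc: "r * c = 1 / eta" unfolding r_def c_def using sq by simp
  have lbnn: "\<forall>i. lbk $ i \<ge> 0" by (simp add: lb)
  have dq: "((\<lambda>y. 1 / eta * (lk \<bullet> Phi y)) has_derivative (\<lambda>h. ((1 / eta) *\<^sub>R (transpose D *v lk)) \<bullet> h)) (at xb)"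
    unfolding D_def by (rule lamPhi_deriv) (use Phi_deriv in blast)
  have mn': "\<forall>y\<in>X. rho * f xb + (\<lambda>y. 1 / eta * (lk \<bullet> Phi y)) xb + (r / 2) * (norm (xb - xk))\<^sup>2
      \<le> rho * f y + (\<lambda>y. 1 / eta * (lk \<bullet> Phi y)) y + (r / 2) * (norm (y - xk))\<^sup>2"
    using mn by (simp add: scaled_lagrangian_def r_def)
  have S1': "0 \<le> rho * (f xs - f xb) + ((1 / eta) *\<^sub>R (transpose D *v lk)) \<bullet> (xs - xb) + 2 * (r / 2) * ((xb - xk) \<bullet> (xs - xb))"
    by (rule xVI[OF xbX xsX cX cf _ dq mn']) (use rho in simp)
  have S1: "0 \<le> rho * (f xs - f xb) + 1 / eta * (lk \<bullet> (D *v (xs - xb))) + r * ((xs - xb) \<bullet> (xb - xk))"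
    using S1' by (simp add: Tdot dot_lmul_matrix inner_commute[of "xb - xk"] inner_commute[of "transpose D *v lk"])
  have S2': "1 / eta * ((ls - lbk) \<bullet> Phi xb) \<le> s * ((ls - lbk) \<bullet> (lbk - lk))"
    by (rule lamVI[OF spos eta ls]) (simp add: lb s_def)
  have S2: "1 / eta * (ls \<bullet> Phi xb - lbk \<bullet> Phi xb) \<le> s * (- ((ls - lbk) \<bullet> (lk - lbk)))"
  proof -
    have "lbk - lk = - (lk - lbk)" by simp
    then have "(ls - lbk) \<bullet> (lbk - lk) = - ((ls - lbk) \<bullet> (lk - lbk))" by (metis inner_minus_right)
    with S2' show ?thesis by (simp add: inner_diff_left)
  qed
  have S3: "lbk \<bullet> Phi xb + lbk \<bullet> (D *v (xs - xb)) \<le> lbk \<bullet> Phi xs"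
    unfolding D_def by (rule conv_grad_vec[OF Phi_convex Phi_deriv lbnn])
  have S4: "ls \<bullet> Phi xs + ls \<bullet> (DPhi xs *v (xb - xs)) \<le> ls \<bullet> Phi xb"
    by (rule conv_grad_vec[OF Phi_convex Phi_deriv ls])
  have G: "(xs - xb) \<bullet> g = lk \<bullet> (D *v (xs - xb)) - lbk \<bullet> (D *v (xs - xb))"
    unfolding g_def Tdot by (simp add: inner_diff_left)
  have ngb: "(norm g)\<^sup>2 \<le> Rfun DPhi xb * (norm (lk - lbk))\<^sup>2"
  proof -
    have "norm g \<le> spec_norm D * norm (lk - lbk)" unfolding g_def by (rule normT)
    then have "(norm g)\<^sup>2 \<le> (spec_norm D * norm (lk - lbk))\<^sup>2"
      by (rule power_mono) simp
    then show ?thesis by (simp add: Rfun_def D_def power_mult_distrib)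
  qed
  have ng: "r * c\<^sup>2 * (norm g)\<^sup>2 \<le> s * (norm (lk - lbk))\<^sup>2"
  proof -
    have rc2: "r * c\<^sup>2 = 1 / (eta * sqrt (Rfun DPhi xk))"
    proof -
      have "r * c\<^sup>2 = (r * c) * c" by (simp add: power2_eq_square)
      also have "\<dots> = 1 / (eta * sqrt (Rfun DPhi xk))" by (subst rc) (simp add: c_def)
      finally show ?thesis .
    qed
    have "(norm g)\<^sup>2 \<le> mu * Rfun DPhi xb * (norm (lk - lbk))\<^sup>2"
    proof -
      have "Rfun DPhi xb * (norm (lk - lbk))\<^sup>2 \<le> mu * (Rfun DPhi xb * (norm (lk - lbk))\<^sup>2)"
        using mu Rb by (simp add: mult_le_cancel_right1 not_less)
      with ngb show ?thesis by (simp add: mult.assoc)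
    qed
    then have "(norm g)\<^sup>2 / (eta * sqrt (Rfun DPhi xk)) \<le> mu * Rfun DPhi xb * (norm (lk - lbk))\<^sup>2 / (eta * sqrt (Rfun DPhi xk))"
      using eta sq by (simp add: divide_right_mono)
    then show ?thesis unfolding rc2 s_def by simp
  qed
  have xn': "xs - xn = (xs - xb) - c *\<^sub>R g"
    unfolding xn g_def c_def D_def using eta by simp
  have e1: "(norm (xs - xk))\<^sup>2 = (norm (xs - xb))\<^sup>2 + 2 * ((xs - xb) \<bullet> (xb - xk)) + (norm (xb - xk))\<^sup>2"
    using ns_add[of "xs - xb" "xb - xk"] by simp
  have e2: "(norm (xs - xn))\<^sup>2 = (norm (xs - xb))\<^sup>2 - 2 * c * ((xs - xb) \<bullet> g) + c\<^sup>2 * (norm g)\<^sup>2"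
    unfolding xn' by (rule ns_subs)
  have e3: "(norm (ls - lk))\<^sup>2 = (norm (ls - lbk))\<^sup>2 - 2 * ((ls - lbk) \<bullet> (lk - lbk)) + (norm (lk - lbk))\<^sup>2"
    using ns_sub[of "ls - lbk" "lk - lbk"] by simp
  have e4: "ln = lbk" using ln by simp
  have lhs: "(xb - xs) \<bullet> (transpose (DPhi xs) *v ls) - (lbk - ls) \<bullet> Phi xs
      = ls \<bullet> (DPhi xs *v (xb - xs)) - (lbk \<bullet> Phi xs - ls \<bullet> Phi xs)"
    by (simp only: Tdot inner_diff_left)
  have "rho * (f xb - f xs) + 1 / eta * (ls \<bullet> (DPhi xs *v (xb - xs)) - (lbk \<bullet> Phi xs - ls \<bullet> Phi xs))
     \<le> 1/2 * (r * (((norm (xs - xb))\<^sup>2 + 2 * ((xs - xb) \<bullet> (xb - xk)) + (norm (xb - xk))\<^sup>2)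
              - ((norm (xs - xb))\<^sup>2 - 2 * c * ((xs - xb) \<bullet> g) + c\<^sup>2 * (norm g)\<^sup>2))
          + s * (((norm (ls - lbk))\<^sup>2 - 2 * ((ls - lbk) \<bullet> (lk - lbk)) + (norm (lk - lbk))\<^sup>2) - (norm (ls - lbk))\<^sup>2))"
    by (rule alg[OF _ r0 _ rc ng S1 S2 S3 S4 G]) (use eta in simp_all)
  then show ?thesis unfolding lhs e1 e2 e3 e4 r_def[symmetric] s_def[symmetric] .
qed


lemma r_mono:
  fixes e e1 R R1 :: real
  assumes "e1 > 0" "R > 0" "R1 > 0" "e \<ge> e1 * sqrt (R / R1)"
  shows "sqrt R / e \<le> sqrt R1 / e1"
proof -
  have "sqrt (R / R1) = sqrt R / sqrt R1" by (simp add: real_sqrt_divide)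
  with assms have h: "e * sqrt R1 \<ge> e1 * sqrt R" by (simp add: field_simps)
  have e: "e > 0" using assms(4) assms(1-3) by (metis mult_pos_pos order_less_le_trans real_sqrt_gt_zero divide_pos_pos)
  show ?thesis using h e assms by (simp add: divide_le_eq le_divide_eq field_simps)
qed

lemma s_mono:
  fixes e e1 R R1 B B1 mu :: real
  assumes "e1 > 0" "R > 0" "R1 > 0" "B > 0" "B1 > 0" "mu > 0"
    "e \<ge> e1 * (B * sqrt R1) / (B1 * sqrt R)"
  shows "mu * B / (e * sqrt R) \<le> mu * B1 / (e1 * sqrt R1)"
proof -
  have sR: "sqrt R > 0" "sqrt R1 > 0" using assms by auto
  have h: "e * (B1 * sqrt R) \<ge> e1 * (B * sqrt R1)" using assms(7) sR assms(5)
    by (simp add: divide_le_eq field_simps)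
  have e: "e > 0"
  proof -
    have "e1 * (B * sqrt R1) / (B1 * sqrt R) > 0" using assms sR by simp
    then show ?thesis using assms(7) by linarith
  qed
  have "B * (e1 * sqrt R1) \<le> B1 * (e * sqrt R)" using h by (simp add: algebra_simps)
  then have "B / (e * sqrt R) \<le> B1 / (e1 * sqrt R1)"
    using e sR assms by (simp add: frac_le_eq divide_le_eq le_divide_eq field_simps)
  then show ?thesis using assms(6) by (simp add: mult_left_mono divide_inverse mult.assoc)
qed

theorem theorem3p3:
  fixes X :: "(real^'n) set"
    and f :: "real^'n \<Rightarrow> real"
    and Phi :: "real^'n \<Rightarrow> real^'p"
    and DPhi :: "real^'n \<Rightarrow> real^'n^'p"
    and rho mu :: real
    and eta :: "nat \<Rightarrow> real"
    and x xb :: "nat \<Rightarrow> real^'n"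
    and lam lb :: "nat \<Rightarrow> real^'p"
    and t :: nat
  assumes X_ne: "X \<noteq> {}" and X_closed: "closed X" and X_convex: "convex X"
    and f_convex: "convex_on UNIV f"
    and Phi_convex: "\<forall>i. convex_on UNIV (\<lambda>y. Phi y $ i)"
    and Phi_deriv: "\<forall>z i. ((\<lambda>y. Phi y $ i) has_derivative (\<lambda>h. (DPhi z $ i) \<bullet> h)) (at z)"
    and DPhi_cont: "continuous_on UNIV DPhi"
    and rho_pos: "rho > 0" and mu_gt: "mu > 1" and t_pos: "t > 0"
    and start: "x 0 \<in> X" "\<forall>i. lam 0 $ i \<ge> 0"
    and eta_pos: "\<forall>k. eta k > 0"
    and R_pos: "\<forall>k\<le>t. Rfun DPhi (x k) > 0 \<and> Rfun DPhi (xb k) > 0"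
    and xb_step: "\<forall>k\<le>t. xb k \<in> X \<and>
        (\<forall>y\<in>X. scaled_lagrangian f Phi (xb k) (lam k) rho (eta k)
                  + (sqrt (Rfun DPhi (x k)) / eta k) / 2 * (norm (xb k - x k))\<^sup>2
               \<le> scaled_lagrangian f Phi y (lam k) rho (eta k)
                  + (sqrt (Rfun DPhi (x k)) / eta k) / 2 * (norm (y - x k))\<^sup>2)"
    and lb_step: "\<forall>k\<le>t. lb k = (\<chi> i. max (lam k $ i + Phi (xb k) $ i /
                 (eta k * (mu * Rfun DPhi (xb k) / (eta k * sqrt (Rfun DPhi (x k)))))) 0)"
    and w_step: "\<forall>k\<le>t.
        x (Suc k) = x k - ((x k - xb k)
           - (1 / (eta k * (sqrt (Rfun DPhi (x k)) / eta k))) *\<^sub>R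
               (transpose (DPhi (xb k)) *v (lam k - lb k)))
      \<and> lam (Suc k) = lam k - (lam k - lb k)"
    and eta_growth: "\<forall>k. 1 \<le> k \<and> k \<le> t \<longrightarrow>
        eta k \<ge> max (eta (k - 1) * sqrt (Rfun DPhi (x k) / Rfun DPhi (x (k - 1))))
                     (eta (k - 1) * (Rfun DPhi (xb k) * sqrt (Rfun DPhi (x (k - 1))))
                        / (Rfun DPhi (xb (k - 1)) * sqrt (Rfun DPhi (x k))))"
  shows "let S = (\<Sum>k\<le>t. 1 / eta k);
             wbar = (1 / S) *\<^sub>R (\<Sum>k\<le>t. (1 / eta k) *\<^sub>R (xb k, lb k));
             xavg = (1 / (real t + 1)) *\<^sub>R (\<Sum>k\<le>t. xb k);
             eta_avg = (real t + 1) / S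
         in fst wbar \<in> X \<and> (\<forall>i. snd wbar $ i \<ge> 0) \<and>
            (\<forall>xs ls. xs \<in> X \<longrightarrow> (\<forall>i. ls $ i \<ge> 0) \<longrightarrow>
               f xavg - f xs + (wbar - (xs, ls)) \<bullet> ((1 / (eta_avg * rho)) *\<^sub>R Gamma Phi DPhi (xs, ls))
               \<le> 1 / (2 * eta 0 * rho * (real t + 1)) *
                  (sqrt (Rfun DPhi (x 0)) * (norm (xs - x 0))\<^sup>2
                   + mu * Rfun DPhi (xb 0) / sqrt (Rfun DPhi (x 0)) * (norm (ls - lam 0))\<^sup>2))"
  proof -
  define r where "r k = sqrt (Rfun DPhi (x k)) / eta k" for k
  define s where "s k = mu * Rfun DPhi (xb k) / (eta k * sqrt (Rfun DPhi (x k)))" for k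
  define S where "S = (\<Sum>k\<le>t. 1 / eta k)"
  have Spos: "S > 0" unfolding S_def using eta_pos
    by (intro sum_pos) auto
  have lbnn: "\<forall>k\<le>t. \<forall>i. lb k $ i \<ge> 0" using lb_step by simp
  have mem1: "fst ((1 / S) *\<^sub>R (\<Sum>k\<le>t. (1 / eta k) *\<^sub>R (xb k, lb k))) \<in> X"
  proof -
    have "fst ((1 / S) *\<^sub>R (\<Sum>k\<le>t. (1 / eta k) *\<^sub>R (xb k, lb k))) = (\<Sum>k\<le>t. (1 / S * (1 / eta k)) *\<^sub>R xb k)"
      by (simp add: fst_sum scaleR_sum_right)
    also have "\<dots> \<in> X"
    proof (rule convex_sum[OF _ X_convex])
      have "(\<Sum>k\<le>t. 1 / S * (1 / eta k)) = 1 / S * S" unfolding S_def by (rule sum_distrib_left[symmetric])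
      then show "(\<Sum>k\<le>t. 1 / S * (1 / eta k)) = 1" using Spos by simp
      show "\<And>k. k \<in> {..t} \<Longrightarrow> 0 \<le> 1 / S * (1 / eta k)" using Spos eta_pos by (simp add: less_imp_le)
      show "\<And>k. k \<in> {..t} \<Longrightarrow> xb k \<in> X" using xb_step by simp
    qed simp
    finally show ?thesis .
  qed
  have mem2: "\<forall>i. snd ((1 / S) *\<^sub>R (\<Sum>k\<le>t. (1 / eta k) *\<^sub>R (xb k, lb k))) $ i \<ge> 0"
  proof
    fix i
    have "snd ((1 / S) *\<^sub>R (\<Sum>k\<le>t. (1 / eta k) *\<^sub>R (xb k, lb k))) $ i = (\<Sum>k\<le>t. 1 / S * (1 / eta k * lb k $ i))"
      by (simp add: snd_sum sum_component sum_distrib_left)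
    also have "\<dots> \<ge> 0" using Spos eta_pos lbnn by (intro sum_nonneg) (simp add: less_imp_le)
    finally show "snd ((1 / S) *\<^sub>R (\<Sum>k\<le>t. (1 / eta k) *\<^sub>R (xb k, lb k))) $ i \<ge> 0" .
  qed
  have main: "\<forall>xs ls. xs \<in> X \<longrightarrow> (\<forall>i. ls $ i \<ge> 0) \<longrightarrow>
      f ((1 / (real t + 1)) *\<^sub>R (\<Sum>k\<le>t. xb k)) - f xs
       + ((1 / S) *\<^sub>R (\<Sum>k\<le>t. (1 / eta k) *\<^sub>R (xb k, lb k)) - (xs, ls)) \<bullet> ((1 / ((real t + 1) / S * rho)) *\<^sub>R Gamma Phi DPhi (xs, ls))
       \<le> 1 / (2 * eta 0 * rho * (real t + 1)) *
          (sqrt (Rfun DPhi (x 0)) * (norm (xs - x 0))\<^sup>2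
           + mu * Rfun DPhi (xb 0) / sqrt (Rfun DPhi (x 0)) * (norm (ls - lam 0))\<^sup>2)"
  proof (intro allI impI)
    fix xs :: "real^'n" and ls :: "real^'p" assume xsX: "xs \<in> X" and ls: "\<forall>i. ls $ i \<ge> 0"
    define E where "E k xx ll = r k * (norm (xs - xx))\<^sup>2 + s k * (norm (ls - ll))\<^sup>2" for k xx ll
    define V where "V = transpose (DPhi xs) *v ls"
    define B where "B k = (xb k - xs) \<bullet> V - (lb k - ls) \<bullet> Phi xs" for k
    define a where "a k = rho * (f (xb k) - f xs) + 1 / eta k * B k" for k
    have stepk: "a k \<le> 1/2 * (E k (x k) (lam k) - E k (x (Suc k)) (lam (Suc k)))" if k: "k \<le> t" for k
    proof -
      have "a k \<le> 1/2 * ((sqrt (Rfun DPhi (x k)) / eta k) * ((norm (xs - x k))\<^sup>2 - (norm (xs - x (Suc k)))\<^sup>2)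
         + (mu * Rfun DPhi (xb k) / (eta k * sqrt (Rfun DPhi (x k)))) * ((norm (ls - lam k))\<^sup>2 - (norm (ls - lam (Suc k)))\<^sup>2))"
        unfolding a_def B_def V_def
        by (rule step[OF X_convex f_convex Phi_convex Phi_deriv rho_pos])
          (use k eta_pos mu_gt R_pos xb_step xsX ls lb_step w_step in auto)
      then show ?thesis unfolding E_def r_def s_def by (simp add: algebra_simps)
    qed
    have Emono: "E k xx ll \<le> E (k - 1) xx ll" if "1 \<le> k" "k \<le> t" for k xx ll
    proof -
      have k1: "k - 1 \<le> t" using that by simp
      have g: "eta k \<ge> eta (k - 1) * sqrt (Rfun DPhi (x k) / Rfun DPhi (x (k - 1)))"
              "eta k \<ge> eta (k - 1) * (Rfun DPhi (xb k) * sqrt (Rfun DPhi (x (k - 1))))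
                        / (Rfun DPhi (xb (k - 1)) * sqrt (Rfun DPhi (x k)))"
        using eta_growth that by auto
      have "r k \<le> r (k - 1)" unfolding r_def
        by (rule r_mono) (use g eta_pos R_pos that k1 in auto)
      moreover have "s k \<le> s (k - 1)" unfolding s_def
        by (rule s_mono) (use g eta_pos R_pos that k1 mu_gt in auto)
      ultimately show ?thesis unfolding E_def
        by (intro add_mono mult_right_mono) auto
    qed
    have tel: "(\<Sum>k\<le>m. a k) \<le> 1/2 * E 0 (x 0) (lam 0) - 1/2 * E m (x (Suc m)) (lam (Suc m))" if "m \<le> t" for m
      using that
    proof (induction m)
      case 0 then show ?case using stepk[of 0] by simp
    next
      case (Suc m)
      have "(\<Sum>k\<le>Suc m. a k) = (\<Sum>k\<le>m. a k) + a (Suc m)" by simp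
      also have "\<dots> \<le> 1/2 * E 0 (x 0) (lam 0) - 1/2 * E m (x (Suc m)) (lam (Suc m))
          + 1/2 * (E (Suc m) (x (Suc m)) (lam (Suc m)) - E (Suc m) (x (Suc (Suc m))) (lam (Suc (Suc m))))"
        using Suc.IH[OF Suc_leD[OF Suc.prems]] stepk[OF Suc.prems] by linarith
      also have "\<dots> \<le> 1/2 * E 0 (x 0) (lam 0) - 1/2 * E (Suc m) (x (Suc (Suc m))) (lam (Suc (Suc m)))"
        using Emono[of "Suc m" "x (Suc m)" "lam (Suc m)"] Suc.prems by (simp add: field_simps)
      finally show ?case .
    qed
    have E0: "E t (x (Suc t)) (lam (Suc t)) \<ge> 0"
    proof -
      have p: "eta t > 0" "Rfun DPhi (x t) > 0" "Rfun DPhi (xb t) > 0" using eta_pos R_pos by auto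
      have "r t \<ge> 0" unfolding r_def using p by simp
      moreover have "s t \<ge> 0" unfolding s_def using p mu_gt by simp
      ultimately show ?thesis unfolding E_def by simp
    qed
    have sumA: "(\<Sum>k\<le>t. a k) \<le> 1/2 * E 0 (x 0) (lam 0)" using tel[of t] E0 by simp
    have T1: "real t + 1 > 0" by simp
    have jen: "f ((1 / (real t + 1)) *\<^sub>R (\<Sum>k\<le>t. xb k)) \<le> (\<Sum>k\<le>t. 1 / (real t + 1) * f (xb k))"
    proof -
      have "f ((1 / (real t + 1)) *\<^sub>R (\<Sum>k\<le>t. xb k)) = f (\<Sum>k\<le>t. (1 / (real t + 1)) *\<^sub>R xb k)"
        by (simp add: scaleR_sum_right)
      also have "\<dots> \<le> (\<Sum>k\<le>t. 1 / (real t + 1) * f (xb k))"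
        by (rule convex_on_sum[OF _ _ f_convex]) auto
      finally show ?thesis .
    qed
    have inn: "((1 / S) *\<^sub>R (\<Sum>k\<le>t. (1 / eta k) *\<^sub>R (xb k, lb k)) - (xs, ls)) \<bullet> ((1 / ((real t + 1) / S * rho)) *\<^sub>R Gamma Phi DPhi (xs, ls))
        = 1 / ((real t + 1) * rho) * (\<Sum>k\<le>t. 1 / eta k * B k)"
    proof -
      have fs: "fst ((1 / S) *\<^sub>R (\<Sum>k\<le>t. (1 / eta k) *\<^sub>R (xb k, lb k))) = (1 / S) *\<^sub>R (\<Sum>k\<le>t. (1 / eta k) *\<^sub>R xb k)"
        by (simp add: fst_sum)
      have sn: "snd ((1 / S) *\<^sub>R (\<Sum>k\<le>t. (1 / eta k) *\<^sub>R (xb k, lb k))) = (1 / S) *\<^sub>R (\<Sum>k\<le>t. (1 / eta k) *\<^sub>R lb k)"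
        by (simp add: snd_sum)
      have "((1 / S) *\<^sub>R (\<Sum>k\<le>t. (1 / eta k) *\<^sub>R (xb k, lb k)) - (xs, ls)) \<bullet> ((1 / ((real t + 1) / S * rho)) *\<^sub>R Gamma Phi DPhi (xs, ls))
          = (S / ((real t + 1) * rho)) * ((fst ((1 / S) *\<^sub>R (\<Sum>k\<le>t. (1 / eta k) *\<^sub>R (xb k, lb k))) - xs) \<bullet> V
              - (snd ((1 / S) *\<^sub>R (\<Sum>k\<le>t. (1 / eta k) *\<^sub>R (xb k, lb k))) - ls) \<bullet> Phi xs)"
        unfolding Gamma_def V_def by (simp add: inner_prod_def right_diff_distrib diff_divide_distrib)
      also have "(fst ((1 / S) *\<^sub>R (\<Sum>k\<le>t. (1 / eta k) *\<^sub>R (xb k, lb k))) - xs) \<bullet> V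
              - (snd ((1 / S) *\<^sub>R (\<Sum>k\<le>t. (1 / eta k) *\<^sub>R (xb k, lb k))) - ls) \<bullet> Phi xs
          = (1 / S) * (\<Sum>k\<le>t. 1 / eta k * B k)"
      proof -
        have "(\<Sum>k\<le>t. 1 / eta k * B k) = (\<Sum>k\<le>t. 1 / eta k * (xb k \<bullet> V)) - S * (xs \<bullet> V)
             - ((\<Sum>k\<le>t. 1 / eta k * (lb k \<bullet> Phi xs)) - S * (ls \<bullet> Phi xs))"
          unfolding B_def S_def by (simp add: inner_diff_left algebra_simps sum_subtractf sum_distrib_left sum_distrib_right sum.distrib)
        moreover have "(fst ((1 / S) *\<^sub>R (\<Sum>k\<le>t. (1 / eta k) *\<^sub>R (xb k, lb k))) - xs) \<bullet> V
              - (snd ((1 / S) *\<^sub>R (\<Sum>k\<le>t. (1 / eta k) *\<^sub>R (xb k, lb k))) - ls) \<bullet> Phi xs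
           = (1 / S) * (\<Sum>k\<le>t. 1 / eta k * (xb k \<bullet> V)) - xs \<bullet> V
              - ((1 / S) * (\<Sum>k\<le>t. 1 / eta k * (lb k \<bullet> Phi xs)) - ls \<bullet> Phi xs)"
          unfolding fs sn by (simp add: inner_diff_left inner_sum_left)
        moreover have "\<forall>X Y a b. (1 / S) * (X - S * a - (Y - S * b)) = (1 / S) * X - a - ((1 / S) * Y - b)"
          using Spos by (simp add: field_simps)
        ultimately show ?thesis by simp
      qed
      finally show ?thesis using Spos by simp
    qed
    have sa: "(\<Sum>k\<le>t. a k) = rho * (\<Sum>k\<le>t. f (xb k)) - (real t + 1) * rho * f xs + (\<Sum>k\<le>t. 1 / eta k * B k)"
      unfolding a_def by (simp add: sum.distrib sum_subtractf sum_distrib_left algebra_simps)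
    have "f ((1 / (real t + 1)) *\<^sub>R (\<Sum>k\<le>t. xb k)) - f xs
       + ((1 / S) *\<^sub>R (\<Sum>k\<le>t. (1 / eta k) *\<^sub>R (xb k, lb k)) - (xs, ls)) \<bullet> ((1 / ((real t + 1) / S * rho)) *\<^sub>R Gamma Phi DPhi (xs, ls))
       \<le> 1 / ((real t + 1) * rho) * (\<Sum>k\<le>t. a k)"
    proof -
      have "(\<Sum>k\<le>t. 1 / (real t + 1) * f (xb k)) = 1 / (real t + 1) * (\<Sum>k\<le>t. f (xb k))"
        by (simp add: sum_distrib_left)
      moreover have "1 / ((real t + 1) * rho) * (\<Sum>k\<le>t. a k) = 1 / (real t + 1) * (\<Sum>k\<le>t. f (xb k)) - f xs
           + 1 / ((real t + 1) * rho) * (\<Sum>k\<le>t. 1 / eta k * B k)"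
      proof -
        have "\<forall>F Bs fs. 1 / ((real t + 1) * rho) * (rho * F - (real t + 1) * rho * fs + Bs) = 1 / (real t + 1) * F - fs + 1 / ((real t + 1) * rho) * Bs"
        proof (intro allI)
          fix F Bs fs :: real
          have c: "(real t + 1) * rho > 0" using rho_pos T1 by simp
          have "1 / ((real t + 1) * rho) * (rho * F - (real t + 1) * rho * fs + Bs)
               = (rho * F) / ((real t + 1) * rho) - ((real t + 1) * rho * fs) / ((real t + 1) * rho) + Bs / ((real t + 1) * rho)"
            by (simp add: add_divide_distrib diff_divide_distrib)
          also have "\<dots> = 1 / (real t + 1) * F - fs + 1 / ((real t + 1) * rho) * Bs"
            using c rho_pos by simp
          finally show "1 / ((real t + 1) * rho) * (rho * F - (real t + 1) * rho * fs + Bs) = 1 / (real t + 1) * F - fs + 1 / ((real t + 1) * rho) * Bs" .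
        qed
        then show ?thesis unfolding sa by blast
      qed
      ultimately show ?thesis unfolding inn using jen by linarith
    qed
    also have "\<dots> \<le> 1 / ((real t + 1) * rho) * (1/2 * E 0 (x 0) (lam 0))"
    proof -
      have c: "1 / ((real t + 1) * rho) \<ge> 0" using rho_pos T1 by simp
      show ?thesis by (rule mult_left_mono[OF sumA c])
    qed
    also have "\<dots> = 1 / (2 * eta 0 * rho * (real t + 1)) *
          (sqrt (Rfun DPhi (x 0)) * (norm (xs - x 0))\<^sup>2
           + mu * Rfun DPhi (xb 0) / sqrt (Rfun DPhi (x 0)) * (norm (ls - lam 0))\<^sup>2)"
    proof -
      have gen: "\<forall>e q P N1 N2. e > 0 \<longrightarrow> q > 0 \<longrightarrow> 1 / ((real t + 1) * rho) * (1/2 * (q / e * N1 + P / (e * q) * N2))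
            = 1 / (2 * e * rho * (real t + 1)) * (q * N1 + P / q * N2)"
        using rho_pos T1 by (simp add: field_simps)
      have p: "eta 0 > 0" "sqrt (Rfun DPhi (x 0)) > 0" using eta_pos R_pos by auto
      show ?thesis unfolding E_def r_def s_def using gen p by simp
    qed
    finally show "f ((1 / (real t + 1)) *\<^sub>R (\<Sum>k\<le>t. xb k)) - f xs
       + ((1 / S) *\<^sub>R (\<Sum>k\<le>t. (1 / eta k) *\<^sub>R (xb k, lb k)) - (xs, ls)) \<bullet> ((1 / ((real t + 1) / S * rho)) *\<^sub>R Gamma Phi DPhi (xs, ls))
       \<le> 1 / (2 * eta 0 * rho * (real t + 1)) *
          (sqrt (Rfun DPhi (x 0)) * (norm (xs - x 0))\<^sup>2
           + mu * Rfun DPhi (xb 0) / sqrt (Rfun DPhi (x 0)) * (norm (ls - lam 0))\<^sup>2)" .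
  qed
  show ?thesis unfolding Let_def S_def[symmetric]
    using mem1 mem2 main by blast
qed

end
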